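(* With the setup in the context, let $X\subseteq E\setminus B$, $\mathbf{M}\in A^X$, $\mathbf{w}\in D_{X,\mathbf{M}}$, $Y\subseteq E$ and $\mathbf{t}=\mathbf{w}_Y$. Then $\left|\{\mathbf{m}\in A^{E\setminus B}:\ \Omega_{\mathbf{t},Y,\mathbf{M}}(\mathbf{m})\neq\emptyset\}\right|=|A|^{\,n-k-|X|-\rho_X(Y)}.$
   Context: An almost affine code over a finite alphabet $A$ of length $n$ and dimension $k$ is a subset $C\subseteq A^n$ with $|C|=|A|^k$ such that for every $X\subseteq E=\{1,\dots,n\}$, $\log_{|A|}|C_X|$ is a nonnegative integer ($C_X$ = projection onto coordinates $X$); its associated matroid $M_C$ has rank function $r(X)=\log_{|A|}|C_X|$. Setup: $C$ is an almost affine code of length $n$ and dimension $k$ over $A$ with matroid rank function $r$; $B\subseteq E$ is a basis of $M_C$; $\varphi:A\times A\to A$ is such that for every $y\in A$ both $\varphi(y,\cdot)$ and $\varphi(\cdot,y)$ are bijections. For $\mathbf{m}\in A^{E\setminus B}$, $\Phi_{\mathbf{m}}(\mathbf{w})_i=\mathbf{w}_i$ for $i\in B$ and $=\varphi(\mathbf{w}_i,\mathbf{m}_i)$ for $i\in E\setminus B$, and $C_{\mathbf{m}}=\Phi_{\mathbf{m}}(C)$ (an almost affine code with the same matroid $M_C$; the $C_{\mathbf{m}}$ partition $A^E$). For $X\subseteq E\setminus B$, $\mathbf{M}\in A^X$: $D_{X,\mathbf{M}}=\bigcup_{\mathbf{m}_X=\mathbf{M}}C_{\mathbf{m}}$, an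 almost affine code with rank function $r_{D}(Y)=|Y\setminus(B\cup X)|+r(Y\cap(B\cup X))$, and $\rho_X(Y)=r_D(Y)-r(Y)$. For $\mathbf{t}\in A^Y$ and $\mathbf{m}\in A^{E\setminus B}$: $\Omega_{\mathbf{t},Y,\mathbf{M}}(\mathbf{m})=\emptyset$ if $\mathbf{m}_X\neq\mathbf{M}$, and $\Omega_{\mathbf{t},Y,\mathbf{M}}(\mathbf{m})=\{\mathbf{w}\in C_{\mathbf{m}}:\mathbf{w}_Y=\mathbf{t}\}$ otherwise. *)

theory Defs
  imports Main "HOL-Library.FuncSet"
begin

text \<open>Words of length n over alphabet A are functions in PiE {1..n} (\<lambda>_. A).
  Projection onto coordinates X is restriction.\<close>

definition proj :: "(nat \<Rightarrow> 'a) set \<Rightarrow> nat set \<Rightarrow> (nat \<Rightarrow> 'a) set" where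
  "proj C X = (\<lambda>w. restrict w X) ` C"

definition almost_affine :: "'a set \<Rightarrow> nat \<Rightarrow> nat \<Rightarrow> (nat \<Rightarrow> 'a) set \<Rightarrow> bool" where
  "almost_affine A n k C \<longleftrightarrow>
     C \<subseteq> PiE {1..n} (\<lambda>_. A) \<and> card C = card A ^ k \<and>
     (\<forall>X. X \<subseteq> {1..n} \<longrightarrow> (\<exists>r::nat. card (proj C X) = card A ^ r))"

definition aa_rank :: "'a set \<Rightarrow> (nat \<Rightarrow> 'a) set \<Rightarrow> nat set \<Rightarrow> nat" where
  "aa_rank A C X = (THE r. card (proj C X) = card A ^ r)"

definition mat_indep :: "'a set \<Rightarrow> (nat \<Rightarrow> 'a) set \<Rightarrow> nat set \<Rightarrow> bool" where
  "mat_indep A C I \<longleftrightarrow> aa_rank A C I = card I"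

definition mat_basis :: "'a set \<Rightarrow> nat \<Rightarrow> (nat \<Rightarrow> 'a) set \<Rightarrow> nat set \<Rightarrow> bool" where
  "mat_basis A n C B \<longleftrightarrow> B \<subseteq> {1..n} \<and> mat_indep A C B \<and>
     (\<forall>B'. B \<subseteq> B' \<and> B' \<subseteq> {1..n} \<and> mat_indep A C B' \<longrightarrow> B' = B)"

definition Phi :: "('a \<Rightarrow> 'a \<Rightarrow> 'a) \<Rightarrow> nat \<Rightarrow> nat set \<Rightarrow> (nat \<Rightarrow> 'a) \<Rightarrow> (nat \<Rightarrow> 'a) \<Rightarrow> (nat \<Rightarrow> 'a)" where
  "Phi \<phi> n B m w = restrict (\<lambda>i. if i \<in> B then w i else \<phi> (w i) (m i)) {1..n}"

definition Cm :: "('a \<Rightarrow> 'a \<Rightarrow> 'a) \<Rightarrow> nat \<Rightarrow> nat set \<Rightarrow> (nat \<Rightarrow> 'a) set \<Rightarrow> (nat \<Rightarrow> 'a) \<Rightarrow> (nat \<Rightarrow> 'a) set" where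
  "Cm \<phi> n B C m = Phi \<phi> n B m ` C"

definition Dcode :: "'a set \<Rightarrow> ('a \<Rightarrow> 'a \<Rightarrow> 'a) \<Rightarrow> nat \<Rightarrow> nat set \<Rightarrow> (nat \<Rightarrow> 'a) set
    \<Rightarrow> nat set \<Rightarrow> (nat \<Rightarrow> 'a) \<Rightarrow> (nat \<Rightarrow> 'a) set" where
  "Dcode A \<phi> n B C X M =
     (\<Union>m \<in> {m \<in> PiE ({1..n} - B) (\<lambda>_. A). restrict m X = M}. Cm \<phi> n B C m)"

definition rho :: "'a set \<Rightarrow> ('a \<Rightarrow> 'a \<Rightarrow> 'a) \<Rightarrow> nat \<Rightarrow> nat set \<Rightarrow> (nat \<Rightarrow> 'a) set
    \<Rightarrow> nat set \<Rightarrow> (nat \<Rightarrow> 'a) \<Rightarrow> nat set \<Rightarrow> nat" where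
  "rho A \<phi> n B C X M Y = aa_rank A (Dcode A \<phi> n B C X M) Y - aa_rank A C Y"

definition Omega :: "('a \<Rightarrow> 'a \<Rightarrow> 'a) \<Rightarrow> nat \<Rightarrow> nat set \<Rightarrow> (nat \<Rightarrow> 'a) set
    \<Rightarrow> (nat \<Rightarrow> 'a) \<Rightarrow> nat set \<Rightarrow> nat set \<Rightarrow> (nat \<Rightarrow> 'a) \<Rightarrow> (nat \<Rightarrow> 'a) \<Rightarrow> (nat \<Rightarrow> 'a) set" where
  "Omega \<phi> n B C t Y X M m =
     (if restrict m X \<noteq> M then {} else {w \<in> Cm \<phi> n B C m. restrict w Y = t})"

end

theory Submission
  imports Defs
begin


lemma card_restrict_sel:
  assumes "finite K" "I \<subseteq> K" "S \<subseteq> PiE I (\<lambda>_. A)"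
  shows "card {f \<in> PiE (K::nat set) (\<lambda>_. A). restrict f I \<in> S} = card S * card A ^ card (K - I)"
proof -
  let ?g = "\<lambda>(s,h). (\<lambda>i. if i \<in> I then s i else h i)"
  have eq: "{f \<in> PiE K (\<lambda>_. A). restrict f I \<in> S} = ?g ` (S \<times> PiE (K - I) (\<lambda>_. A))"
  proof (intro equalityI subsetI)
    fix f assume f: "f \<in> {f \<in> PiE K (\<lambda>_. A). restrict f I \<in> S}"
    have "f = ?g (restrict f I, restrict f (K - I))"
      using f assms(2) by (auto simp: fun_eq_iff PiE_def extensional_def)
    moreover have "(restrict f I, restrict f (K - I)) \<in> S \<times> PiE (K - I) (\<lambda>_. A)"
      using f by auto
    ultimately show "f \<in> ?g ` (S \<times> PiE (K - I) (\<lambda>_. A))" by blast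
  next
    fix f assume "f \<in> ?g ` (S \<times> PiE (K - I) (\<lambda>_. A))"
    then obtain s h where sh: "s \<in> S" "h \<in> PiE (K - I) (\<lambda>_. A)" and f: "f = ?g (s,h)" by auto
    have s: "s \<in> PiE I (\<lambda>_. A)" using sh assms(3) by auto
    have "restrict f I = s" using s f by (auto simp: fun_eq_iff PiE_def extensional_def)
    moreover have "f \<in> PiE K (\<lambda>_. A)" using s sh f assms(2)
      by (auto simp: PiE_def extensional_def Pi_def)
    ultimately show "f \<in> {f \<in> PiE K (\<lambda>_. A). restrict f I \<in> S}" using sh by auto
  qed
  have inj: "inj_on ?g (S \<times> PiE (K - I) (\<lambda>_. A))"
  proof (rule inj_onI)
    fix p p' assume p: "p \<in> S \<times> PiE (K - I) (\<lambda>_. A)" and p': "p' \<in> S \<times> PiE (K - I) (\<lambda>_. A)"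
      and e0: "?g p = ?g p'"
    obtain s h s' h' where pp: "p = (s,h)" "p' = (s',h')" by (cases p, cases p') auto
    have a: "s \<in> S" "h \<in> PiE (K - I) (\<lambda>_. A)" "s' \<in> S" "h' \<in> PiE (K - I) (\<lambda>_. A)"
      using p p' pp by auto
    have e: "(\<lambda>i. if i \<in> I then s i else h i) = (\<lambda>i. if i \<in> I then s' i else h' i)" using e0 pp by simp
    have s: "s \<in> PiE I (\<lambda>_. A)" "s' \<in> PiE I (\<lambda>_. A)" using a assms(3) by auto
    show "p = p'" unfolding pp
    proof (simp, rule conjI)
      show "s = s'"
      proof
        fix i show "s i = s' i" using fun_cong[OF e, of i] s by (cases "i \<in> I") (auto simp: PiE_def extensional_def)
      qed
      show "h = h'"
      proof
        fix i show "h i = h' i" using fun_cong[OF e, of i] a by (cases "i \<in> I") (auto simp: PiE_def extensional_def)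
      qed
    qed
  qed
  show ?thesis
    unfolding eq card_image[OF inj] card_cartesian_product card_PiE[OF finite_Diff[OF assms(1)]]
    by simp
qed




locale aac =
  fixes A :: "'a set" and n k :: nat and C :: "(nat \<Rightarrow> 'a) set"
  assumes finA: "finite A" and q2: "card A \<ge> 2" and aff: "almost_affine A n k C"
begin

definition ind :: "nat set \<Rightarrow> bool" where
  "ind I \<longleftrightarrow> card (proj C I) = card A ^ card I"

lemma C_sub: "C \<subseteq> PiE {1..n} (\<lambda>_. A)" using aff by (simp add: almost_affine_def)

lemma finC: "finite C"
proof -
  have "card C = card A ^ k" using aff by (simp add: almost_affine_def)
  moreover have "card A ^ k > 0" using q2 by simp
  ultimately have "card C > 0" by simp
  then show ?thesis by (rule card_ge_0_finite)
qed

lemma fin_proj: "finite (proj C X)" unfolding proj_def using finC by simp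

lemma pow_inj: "card A ^ a = card A ^ b \<Longrightarrow> a = b"
  using q2 power_inject_exp[of "card A" a b] by simp

lemma rank_eq: "card (proj D Y) = card A ^ r \<Longrightarrow> aa_rank A D Y = r"
  unfolding aa_rank_def by (rule the_equality) (auto dest: pow_inj)

lemma proj_pow: assumes "X \<subseteq> {1..n}" shows "card (proj C X) = card A ^ aa_rank A C X"
proof -
  obtain r where r: "card (proj C X) = card A ^ r" using aff assms by (auto simp: almost_affine_def)
  show ?thesis using rank_eq[OF r] r by simp
qed

lemma C_val: "c \<in> C \<Longrightarrow> i \<in> {1..n} \<Longrightarrow> c i \<in> A"
  using C_sub by (auto simp: PiE_iff)

lemma proj_mem: assumes "y \<in> proj C X" "X \<subseteq> {1..n}" shows "y \<in> PiE X (\<lambda>_. A)"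
proof -
  obtain c where c: "c \<in> C" "y = restrict c X" using assms(1) by (auto simp: proj_def)
  have "\<forall>i\<in>X. c i \<in> A" using C_val c assms(2) by blast
  then show ?thesis using c by (simp add: restrict_PiE_iff)
qed

lemma proj_restrict: assumes "Z \<subseteq> Y" shows "proj C Z = (\<lambda>y. restrict y Z) ` proj C Y"
proof -
  have "Y \<inter> Z = Z" using assms by blast
  then show ?thesis by (simp add: proj_def image_image)
qed

lemma rank_mono: assumes "Z \<subseteq> Y" "Y \<subseteq> {1..n}" shows "aa_rank A C Z \<le> aa_rank A C Y"
proof -
  have "card (proj C Z) \<le> card (proj C Y)" unfolding proj_restrict[OF assms(1)]
    by (rule card_image_le[OF fin_proj])
  then show ?thesis using proj_pow[of Z] proj_pow[of Y] assms q2
    by (metis dual_order.trans power_le_imp_le_exp Suc_1 Suc_le_lessD)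
qed

end


context aac begin
lemma proj_insert_card:
  assumes "I \<subseteq> {1..n}" "j \<in> {1..n}" "j \<notin> I"
  shows "card (proj C (insert j I)) = card (proj C I) \<or> card (proj C (insert j I)) = card A * card (proj C I)"
proof -
  have pr: "proj C I = (\<lambda>y. restrict y I) ` proj C (insert j I)" by (rule proj_restrict) auto
  have le1: "card (proj C I) \<le> card (proj C (insert j I))"
    unfolding pr by (rule card_image_le[OF fin_proj])
  have "proj C (insert j I) \<subseteq> (\<lambda>(y,a). y(j:=a)) ` (proj C I \<times> A)"
  proof
    fix y assume "y \<in> proj C (insert j I)"
    then obtain c where c: "c \<in> C" "y = restrict c (insert j I)" by (auto simp: proj_def)
    have "c j \<in> A" using C_val c assms(2) by blast
    moreover have "y = (restrict c I)(j := c j)" using c assms by (auto simp: fun_eq_iff)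
    moreover have "(restrict c I, c j) \<in> proj C I \<times> A" using c \<open>c j \<in> A\<close> by (auto simp: proj_def)
    ultimately show "y \<in> (\<lambda>(y,a). y(j:=a)) ` (proj C I \<times> A)" by (metis (no_types, lifting) case_prod_conv image_eqI)
  qed
  then have "card (proj C (insert j I)) \<le> card (proj C I \<times> A)"
    by (meson card_image_le finite_SigmaI fin_proj finA le_trans card_mono finite_imageI)
  then have le2: "card (proj C (insert j I)) \<le> card A * card (proj C I)"
    by (simp add: card_cartesian_product mult.commute)
  have ij: "insert j I \<subseteq> {1..n}" using assms by auto
  define a where "a = aa_rank A C I"
  define b where "b = aa_rank A C (insert j I)"
  have ca: "card (proj C I) = card A ^ a" using proj_pow[OF assms(1)] a_def by simp
  have cb: "card (proj C (insert j I)) = card A ^ b" using proj_pow[OF ij] b_def by simp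
  have q1: "1 < card A" using q2 by simp
  have "a \<le> b" using le1 ca cb power_le_imp_le_exp[OF q1] by simp
  moreover have "b \<le> Suc a" using le2 ca cb power_le_imp_le_exp[OF q1, of b "Suc a"] by simp
  ultimately have "b = a \<or> b = Suc a" by linarith
  then show ?thesis using ca cb by auto
qed

lemma dep_lemma:
  assumes "I \<subseteq> {1..n}" "j \<in> {1..n}" "j \<notin> I" "card (proj C (insert j I)) = card (proj C I)"
    and "c \<in> C" "c' \<in> C" "restrict c I = restrict c' I"
  shows "c j = c' j"
proof -
  have "inj_on (\<lambda>y. restrict y I) (proj C (insert j I))"
  proof (rule eq_card_imp_inj_on[OF fin_proj])
    have pr: "proj C I = (\<lambda>y. restrict y I) ` proj C (insert j I)" by (rule proj_restrict) auto
    show "card ((\<lambda>y. restrict y I) ` proj C (insert j I)) = card (proj C (insert j I))"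
      using pr assms(4) by simp
  qed
  moreover have "restrict c (insert j I) \<in> proj C (insert j I)" "restrict c' (insert j I) \<in> proj C (insert j I)"
    using assms by (auto simp: proj_def)
  moreover have "restrict (restrict c (insert j I)) I = restrict (restrict c' (insert j I)) I"
  proof -
    have "insert j I \<inter> I = I" by blast
    then show ?thesis using assms(7) by simp
  qed
  ultimately have "restrict c (insert j I) = restrict c' (insert j I)" by (meson inj_onD)
  then show ?thesis by (metis insertI1 restrict_apply')
qed

end


context aac begin
lemma max_lemma:
  assumes "I \<subseteq> Z" "Z \<subseteq> {1..n}" "ind I" "\<forall>j\<in>Z-I. \<not> ind (insert j I)"
    and "c \<in> C" "c' \<in> C" "restrict c I = restrict c' I"
  shows "restrict c Z = restrict c' Z"
proof
  fix j show "restrict c Z j = restrict c' Z j"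
  proof (cases "j \<in> Z")
    case True
    show ?thesis
    proof (cases "j \<in> I")
      case True
      have "c j = c' j" using fun_cong[OF assms(7), of j] True by simp
      then show ?thesis using \<open>j \<in> Z\<close> by simp
    next
      case False
      have fI: "finite I" using finite_subset[OF subset_trans[OF assms(1,2)]] by simp
      have I1: "I \<subseteq> {1..n}" "j \<in> {1..n}" using assms True by auto
      have "\<not> ind (insert j I)" using assms(4) True False by auto
      have ci: "card (insert j I) = Suc (card I)" using fI False by simp
      then have "card (proj C (insert j I)) \<noteq> card A * card (proj C I)"
        using assms(3) \<open>\<not> ind (insert j I)\<close> unfolding ind_def by simp
      then have "card (proj C (insert j I)) = card (proj C I)"
        using proj_insert_card[OF I1(1) I1(2) False] by blast
      then have "c j = c' j" by (rule dep_lemma[OF I1(1) I1(2) False _ assms(5,6,7)])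
      then show ?thesis using True by simp
    qed
  qed simp
qed

end


context aac begin
lemma exists_max:
  assumes "I0 \<subseteq> Z" "Z \<subseteq> {1..n}" "ind I0"
  shows "\<exists>I. I0 \<subseteq> I \<and> I \<subseteq> Z \<and> ind I \<and> (\<forall>j\<in>Z-I. \<not> ind (insert j I))"
proof -
  define F where "F = {I. I0 \<subseteq> I \<and> I \<subseteq> Z \<and> ind I}"
  have fZ: "finite Z" using finite_subset[OF assms(2)] by simp
  have "F \<subseteq> Pow Z" by (auto simp: F_def)
  then have fF: "finite F" using fZ by (meson finite_Pow_iff finite_subset)
  have "I0 \<in> F" using assms by (simp add: F_def)
  define m where "m = Max (card ` F)"
  have "m \<in> card ` F" unfolding m_def using fF \<open>I0 \<in> F\<close> by (intro Max_in) auto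
  then obtain I where I: "I \<in> F" "card I = m" by auto
  have mx: "\<And>I'. I' \<in> F \<Longrightarrow> card I' \<le> m" unfolding m_def using fF by simp
  have "\<forall>j\<in>Z-I. \<not> ind (insert j I)"
  proof (intro ballI notI)
    fix j assume j: "j \<in> Z - I" "ind (insert j I)"
    then have "insert j I \<in> F" using I(1) by (auto simp: F_def)
    then have "card (insert j I) \<le> m" by (rule mx)
    moreover have "finite I" using I(1) fZ finite_subset[of I Z] by (simp add: F_def)
    ultimately show False using j I(2) by simp
  qed
  then show ?thesis using I(1) by (auto simp: F_def)
qed

lemma ind_full: assumes "J \<subseteq> {1..n}" "ind J" shows "proj C J = PiE J (\<lambda>_. A)"
proof (rule card_subset_eq)
  show "finite (PiE J (\<lambda>_. A))" using finA finite_subset[OF assms(1)] by (simp add: finite_PiE)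
  show "proj C J \<subseteq> PiE J (\<lambda>_. A)" using proj_mem assms by blast
  show "card (proj C J) = card (PiE J (\<lambda>_. A))"
    using assms(2) finite_subset[OF assms(1)] by (simp add: ind_def card_PiE)
qed

lemma ind_empty: "ind {}"
proof -
  have "C \<noteq> {}" using aff q2 by (auto simp: almost_affine_def)
  have "(\<lambda>w. restrict w {}) ` C = (\<lambda>_. (\<lambda>_. undefined)) ` C" by (simp add: restrict_def)
  then have "proj C {} = {(\<lambda>_. undefined)}" unfolding proj_def using \<open>C \<noteq> {}\<close> by (simp add: image_constant_conv)
  then show ?thesis by (simp add: ind_def)
qed

end



context aac begin

lemma rank_via:
  assumes "J \<subseteq> Y" "Y \<subseteq> {1..n}" "ind J" "\<forall>c\<in>C. \<forall>c'\<in>C. restrict c J = restrict c' J \<longrightarrow> restrict c Y = restrict c' Y"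
  shows "aa_rank A C Y = card J" and "inj_on (\<lambda>y. restrict y J) (proj C Y)"
proof -
  show inj: "inj_on (\<lambda>y. restrict y J) (proj C Y)"
  proof (rule inj_onI)
    fix y y' assume "y \<in> proj C Y" "y' \<in> proj C Y" and e: "restrict y J = restrict y' J"
    then obtain c c' where c: "c \<in> C" "c' \<in> C" "y = restrict c Y" "y' = restrict c' Y" by (auto simp: proj_def)
    have YJ: "Y \<inter> J = J" using assms(1) by blast
    have "restrict c J = restrict c' J" using e c YJ by simp
    then show "y = y'" using assms(4) c by blast
  qed
  have "card (proj C Y) = card (proj C J)"
    using card_image[OF inj] proj_restrict[OF assms(1)] by simp
  then show "aa_rank A C Y = card J" using assms(3) by (intro rank_eq) (simp add: ind_def)
qed

lemma fiber:
  assumes "Z \<subseteq> Y" "Y \<subseteq> {1..n}" "z \<in> proj C Z"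
  shows "card {y \<in> proj C Y. restrict y Z = z} = card A ^ (aa_rank A C Y - aa_rank A C Z)"
proof -
  have Zn: "Z \<subseteq> {1..n}" using assms by auto
  obtain I where I: "I \<subseteq> Z" "ind I" "\<forall>j\<in>Z-I. \<not> ind (insert j I)"
    using exists_max[OF _ Zn ind_empty] by auto
  obtain J where J: "I \<subseteq> J" "J \<subseteq> Y" "ind J" "\<forall>j\<in>Y-J. \<not> ind (insert j J)"
    using exists_max[OF _ assms(2) I(2)] I(1) assms(1) by auto
  have injZ: "\<forall>c\<in>C. \<forall>c'\<in>C. restrict c I = restrict c' I \<longrightarrow> restrict c Z = restrict c' Z"
    using max_lemma[OF I(1) Zn I(2) I(3)] by blast
  have injY: "\<forall>c\<in>C. \<forall>c'\<in>C. restrict c J = restrict c' J \<longrightarrow> restrict c Y = restrict c' Y"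
    using max_lemma[OF J(2) assms(2) J(3) J(4)] by blast
  have rY: "aa_rank A C Y = card J" and inj: "inj_on (\<lambda>y. restrict y J) (proj C Y)"
    using rank_via[OF J(2) assms(2) J(3) injY] by auto
  have rZ: "aa_rank A C Z = card I" using rank_via[OF I(1) Zn I(2) injZ] by auto
  have Jn: "J \<subseteq> {1..n}" using J assms by auto
  have full: "proj C J = PiE J (\<lambda>_. A)" using ind_full[OF Jn J(3)] .
  define F where "F = {y \<in> proj C Y. restrict y Z = z}"
  define G where "G = {v \<in> PiE J (\<lambda>_. A). restrict v I \<in> {restrict z I}}"
  have img: "(\<lambda>y. restrict y J) ` F = G"
  proof (intro equalityI subsetI)
    fix v assume "v \<in> (\<lambda>y. restrict y J) ` F"
    then obtain y where y: "y \<in> proj C Y" "restrict y Z = z" "v = restrict y J" by (auto simp: F_def)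
    have "v \<in> proj C J" using y proj_restrict[OF J(2)] by auto
    moreover have "restrict v I = restrict z I"
    proof
      fix x show "restrict v I x = restrict z I x"
      proof (cases "x \<in> I")
        case True
        then have "x \<in> J" "x \<in> Z" using J(1) I(1) by auto
        then show ?thesis using True fun_cong[OF y(2), of x] y(3) by simp
      qed simp
    qed
    ultimately show "v \<in> G" using full by (simp add: G_def)
  next
    fix v assume v: "v \<in> G"
    then have "v \<in> proj C J" using full by (simp add: G_def)
    then obtain c where c: "c \<in> C" "v = restrict c J" by (auto simp: proj_def)
    obtain c' where c': "c' \<in> C" "z = restrict c' Z" using assms(3) by (auto simp: proj_def)
    have "restrict c I = restrict c' I" using v c c' I(1) J(1)
      by (auto simp: G_def fun_eq_iff restrict_def split: if_splits)
    then have "restrict c Z = z" using injZ c c' by blast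
    moreover have "restrict (restrict c Y) Z = restrict c Z" "restrict (restrict c Y) J = v"
    proof -
      have "Y \<inter> Z = Z" "Y \<inter> J = J" using assms(1) J(2) by blast+
      then show "restrict (restrict c Y) Z = restrict c Z" "restrict (restrict c Y) J = v" using c by simp_all
    qed
    ultimately have "restrict c Y \<in> F" "v = restrict (restrict c Y) J" using c by (auto simp: F_def proj_def)
    then show "v \<in> (\<lambda>y. restrict y J) ` F" by blast
  qed
  have "inj_on (\<lambda>y. restrict y J) F" using inj by (rule inj_on_subset) (auto simp: F_def)
  then have "card F = card G" using img card_image by fastforce
  also have "card G = card {restrict z I} * card A ^ card (J - I)"
    unfolding G_def
  proof (rule card_restrict_sel)
    show "finite J" using finite_subset[OF Jn] by simp
    show "I \<subseteq> J" by fact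
    have "z \<in> PiE Z (\<lambda>_. A)" using proj_mem[OF assms(3) Zn] .
    then show "{restrict z I} \<subseteq> PiE I (\<lambda>_. A)" using I(1) by (auto simp: PiE_def Pi_def)
  qed
  also have "card (J - I) = card J - card I"
    using J(1) finite_subset[OF Jn] finite_subset[OF J(1)] card_Diff_subset by simp
  finally show ?thesis unfolding F_def rY rZ by simp
qed

lemma basis_card:
  assumes "mat_basis A n C B" shows "k = card B"
proof -
  have Bn: "B \<subseteq> {1..n}" and mi: "mat_indep A C B"
    and mx: "\<forall>B'. B \<subseteq> B' \<and> B' \<subseteq> {1..n} \<and> mat_indep A C B' \<longrightarrow> B' = B"
    using assms unfolding mat_basis_def by blast+
  have indiff: "mat_indep A C I \<longleftrightarrow> ind I" if I: "I \<subseteq> {1..n}" for I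
    unfolding mat_indep_def ind_def proj_pow[OF I] by (auto dest: pow_inj)
  have iB: "ind B" using indiff[OF Bn] mi by simp
  have "\<forall>j\<in>{1..n}-B. \<not> ind (insert j B)"
  proof (intro ballI notI)
    fix j assume j: "j \<in> {1..n} - B" "ind (insert j B)"
    have jn: "insert j B \<subseteq> {1..n}" using j(1) Bn by blast
    then have "mat_indep A C (insert j B)" using indiff j(2) by blast
    then have "insert j B = B" using mx jn by blast
    then show False using j(1) by blast
  qed
  then have inj: "\<forall>c\<in>C. \<forall>c'\<in>C. restrict c B = restrict c' B \<longrightarrow> restrict c {1..n} = restrict c' {1..n}"
  proof (intro ballI impI)
    fix c c' assume "c \<in> C" "c' \<in> C" "restrict c B = restrict c' B"
    then show "restrict c {1..n} = restrict c' {1..n}"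
      using max_lemma[OF Bn order_refl iB \<open>\<forall>j\<in>{1..n}-B. \<not> ind (insert j B)\<close>] by blast
  qed
  have rc: "restrict c {1..n} = c" if "c \<in> C" for c
  proof -
    have "c \<in> PiE {1..n} (\<lambda>_. A)" using that C_sub by (rule subsetD[rotated])
    then have "c \<in> extensional {1..n}" by (simp add: PiE_iff)
    then show ?thesis by (rule extensional_restrict)
  qed
  have "inj_on (\<lambda>c. restrict c B) C"
  proof (rule inj_onI)
    fix c c' assume c: "c \<in> C" "c' \<in> C" "restrict c B = restrict c' B"
    have "restrict c {1..n} = restrict c' {1..n}" using inj c by blast
    then show "c = c'" using rc[OF c(1)] rc[OF c(2)] by simp
  qed
  then have "card C = card (proj C B)" unfolding proj_def by (simp add: card_image)
  moreover have "card C = card A ^ k" using aff by (simp add: almost_affine_def)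
  moreover have "card (proj C B) = card A ^ card B" using iB by (simp add: ind_def)
  ultimately have "card A ^ k = card A ^ card B" by simp
  then show ?thesis by (rule pow_inj)
qed

end



theorem mainTheorem9:
  fixes A :: "'a set" and n k :: nat and C :: "(nat \<Rightarrow> 'a) set"
    and B X Y :: "nat set" and \<phi> :: "'a \<Rightarrow> 'a \<Rightarrow> 'a"
    and M w :: "nat \<Rightarrow> 'a"
  assumes "finite A" and "card A \<ge> 2"
    and "almost_affine A n k C"
    and "mat_basis A n C B"
    and "\<forall>y\<in>A. bij_betw (\<phi> y) A A \<and> bij_betw (\<lambda>x. \<phi> x y) A A"
    and "X \<subseteq> {1..n} - B"
    and "M \<in> PiE X (\<lambda>_. A)"
    and "w \<in> Dcode A \<phi> n B C X M"
    and "Y \<subseteq> {1..n}"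
  shows "card {m \<in> PiE ({1..n} - B) (\<lambda>_. A).
                 Omega \<phi> n B C (restrict w Y) Y X M m \<noteq> {}}
         = card A ^ (n - k - card X - rho A \<phi> n B C X M Y)"
proof -
  interpret aac A n k C using assms(1-3) by unfold_locales
  define q where "q = card A"
  define t where "t = restrict w Y"
  define Z where "Z = Y \<inter> (B \<union> X)"
  define Y3 where "Y3 = Y - (B \<union> X)"
  define V where "V = {m \<in> PiE ({1..n} - B) (\<lambda>_. A). Omega \<phi> n B C (restrict w Y) Y X M m \<noteq> {}}"
  define rY where "rY = aa_rank A C Y"
  define rZ where "rZ = aa_rank A C Z"
  have Bn: "B \<subseteq> {1..n}" using assms(4) by (simp add: mat_basis_def)
  have kB: "k = card B" by (rule basis_card[OF assms(4)])
  have phA: "\<phi> a b \<in> A" if "a \<in> A" "b \<in> A" for a b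
  proof -
    have "bij_betw (\<phi> a) A A" using assms(5) that(1) by blast
    then show ?thesis using that(2) bij_betwE by blast
  qed
  have inj1: "x = y" if "b \<in> A" "x \<in> A" "y \<in> A" "\<phi> x b = \<phi> y b" for b x y
  proof -
    have "bij_betw (\<lambda>x. \<phi> x b) A A" using assms(5) that(1) by blast
    then have "inj_on (\<lambda>x. \<phi> x b) A" by (rule bij_betw_imp_inj_on)
    then show ?thesis using that(2,3,4) inj_onD by fastforce
  qed
  have inj2: "inj_on (\<phi> a) A" if "a \<in> A" for a
  proof -
    have "bij_betw (\<phi> a) A A" using assms(5) that(1) by blast
    then show ?thesis by (rule bij_betw_imp_inj_on)
  qed
  have surj2: "\<phi> a ` A = A" if "a \<in> A" for a
  proof -
    have "bij_betw (\<phi> a) A A" using assms(5) that(1) by blast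
    then show ?thesis by (rule bij_betw_imp_surj_on)
  qed
  have psiA: "inv_into A (\<phi> a) s \<in> A" if "a \<in> A" "s \<in> A" for a s
    using inv_into_into[of s "\<phi> a" A] surj2[OF that(1)] that(2) by simp
  have psi1: "\<phi> a (inv_into A (\<phi> a) s) = s" if "a \<in> A" "s \<in> A" for a s
    using f_inv_into_f[of s "\<phi> a" A] surj2[OF that(1)] that(2) by simp
  have psi2: "inv_into A (\<phi> a) (\<phi> a m) = m" if "a \<in> A" "m \<in> A" for a m
    using inv_into_f_f[OF inj2[OF that(1)] that(2)] .
  have PhiA: "Phi \<phi> n B m c i = (if i \<in> {1..n} then (if i \<in> B then c i else \<phi> (c i) (m i)) else undefined)" for m c i
    by (simp add: Phi_def)
  obtain m0 c0 where m0: "m0 \<in> PiE ({1..n} - B) (\<lambda>_. A)" "restrict m0 X = M" and c0: "c0 \<in> C"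
     and w0: "w = Phi \<phi> n B m0 c0"
    using assms(8) unfolding Dcode_def Cm_def by blast
  have m0M: "m0 i = M i" if "i \<in> X" for i using fun_cong[OF m0(2), of i] that by simp
  have Mx: "M i = undefined" if "i \<notin> X" for i using assms(7) that by (rule PiE_arb)
  have MA: "M i \<in> A" if "i \<in> X" for i using assms(7) that by (rule PiE_mem)
  have m0A: "m0 i \<in> A" if "i \<in> {1..n} - B" for i using m0(1) that by (rule PiE_mem)
  have cA: "c i \<in> A" if "c \<in> C" "i \<in> {1..n}" for c i using C_val that by blast
  have XE: "i \<in> {1..n}" "i \<notin> B" if "i \<in> X" for i using assms(6) that by auto
  have YE: "i \<in> {1..n}" if "i \<in> Y" for i using assms(9) that by auto
  have tY: "t i = (if i \<in> B then c0 i else \<phi> (c0 i) (M i))" if "i \<in> Y" "i \<in> B \<union> X" for i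
    using that YE[OF that(1)] m0M XE by (auto simp: t_def w0 PhiA)
  have tY3: "t i = \<phi> (c0 i) (m0 i)" if "i \<in> Y3" for i
    using that YE by (auto simp: t_def w0 PhiA Y3_def)
  have tA: "t i \<in> A" if "i \<in> Y" for i
  proof (cases "i \<in> B")
    case True then show ?thesis using tY[OF that] that cA[OF c0 YE[OF that]] by simp
  next
    case False
    have "m0 i \<in> A" using m0A False YE[OF that] by simp
    then show ?thesis using False YE[OF that] cA[OF c0 YE[OF that]] phA
      by (simp add: t_def w0 PhiA that)
  qed
  have tout: "t i = undefined" if "i \<notin> Y" for i using that by (simp add: t_def)
  have Vchar: "m \<in> V \<longleftrightarrow> m \<in> PiE ({1..n} - B) (\<lambda>_. A) \<and> restrict m X = M \<and>
       (\<exists>c\<in>C. restrict (Phi \<phi> n B m c) Y = t)" for m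
    unfolding V_def Omega_def Cm_def t_def by auto
  obtain a0 where a0: "a0 \<in> A" using assms(2) by fastforce
  have ZY: "Z \<subseteq> Y" and Zn: "Z \<subseteq> {1..n}" using assms(9) by (auto simp: Z_def)
  have YZ3: "Y = Z \<union> Y3" "Z \<inter> Y3 = {}" by (auto simp: Z_def Y3_def)
  have X3: "X \<inter> Y3 = {}" "X \<union> Y3 \<subseteq> {1..n} - B" using assms(6,9) by (auto simp: Y3_def)

  have c0Z: "restrict c0 Z \<in> proj C Z" using c0 by (auto simp: proj_def)
  define F where "F = {y \<in> proj C Y. restrict y Z = restrict c0 Z}"
  have cardF: "card F = q ^ (rY - rZ)"
    using fiber[OF ZY assms(9) c0Z] by (simp add: F_def q_def rY_def rZ_def)
  have rZY: "rZ \<le> rY" using rank_mono[OF ZY assms(9)] by (simp add: rY_def rZ_def)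

  have Zeq: "restrict c Z = restrict c0 Z \<longleftrightarrow> (\<forall>i\<in>Z. c i = c0 i)" for c
    by (auto simp: fun_eq_iff restrict_def)

  define h where "h = (\<lambda>y. restrict (\<lambda>i. if i \<in> X then M i else inv_into A (\<phi> (y i)) (t i)) (X \<union> Y3))"
  define S where "S = (\<lambda>m. restrict m (X \<union> Y3)) ` V"
  have b1: "\<exists>m\<in>V. restrict m (X \<union> Y3) = h (restrict c Y)"
    if c: "c \<in> C" "\<forall>i\<in>Z. c i = c0 i" for c
  proof -
    define mc where "mc = restrict (\<lambda>i. if i \<in> X then M i else if i \<in> Y3 then inv_into A (\<phi> (c i)) (t i) else a0) ({1..n} - B)"
    have "mc \<in> PiE ({1..n} - B) (\<lambda>_. A)"
      unfolding mc_def restrict_PiE_iff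
    proof
      fix i assume i: "i \<in> {1..n} - B"
      show "(if i \<in> X then M i else if i \<in> Y3 then inv_into A (\<phi> (c i)) (t i) else a0) \<in> A"
      proof (cases "i \<in> X")
        case True then show ?thesis using MA by simp
      next
        case False
        show ?thesis
        proof (cases "i \<in> Y3")
          case True
          then have "i \<in> Y" by (simp add: Y3_def)
          then show ?thesis using False True psiA cA[OF c(1)] i tA by simp
        qed (use False a0 in simp)
      qed
    qed
    moreover have "restrict mc X = M"
    proof
      fix i show "restrict mc X i = M i"
        using XE[of i] Mx[of i] by (cases "i \<in> X") (simp_all add: mc_def)
    qed
    moreover have "restrict (Phi \<phi> n B mc c) Y = t"
    proof
      fix i show "restrict (Phi \<phi> n B mc c) Y i = t i"
      proof (cases "i \<in> Y")
        case False then show ?thesis using tout by simp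
      next
        case iY: True
        have iE: "i \<in> {1..n}" using YE[OF iY] .
        show ?thesis
        proof (cases "i \<in> B \<union> X")
          case True
          then have "i \<in> Z" using iY by (simp add: Z_def)
          then have cc: "c i = c0 i" using c(2) by simp
          show ?thesis
          proof (cases "i \<in> B")
            case True then show ?thesis using iY iE cc tY[OF iY] by (simp add: PhiA)
          next
            case False
            then have iX: "i \<in> X" using \<open>i \<in> B \<union> X\<close> by simp
            then show ?thesis using iY iE cc tY[OF iY] False by (simp add: PhiA mc_def)
          qed
        next
          case False
          then have i3: "i \<in> Y3" using iY by (simp add: Y3_def)
          have "\<phi> (c i) (inv_into A (\<phi> (c i)) (t i)) = t i" using psi1 cA[OF c(1) iE] tA[OF iY] by simp
          then show ?thesis using iY iE False i3 by (simp add: PhiA mc_def)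
        qed
      qed
    qed
    ultimately have "mc \<in> V" using c(1) Vchar by blast
    moreover have "restrict mc (X \<union> Y3) = h (restrict c Y)"
    proof
      fix i show "restrict mc (X \<union> Y3) i = h (restrict c Y) i"
      proof (cases "i \<in> X \<union> Y3")
        case True
        then have "i \<in> {1..n} - B" using X3 by blast
        moreover have "i \<in> Y" if "i \<notin> X" using True that by (simp add: Y3_def)
        ultimately show ?thesis using True by (cases "i \<in> X") (simp_all add: mc_def h_def)
      qed (simp add: h_def)
    qed
    ultimately show ?thesis by blast
  qed
  have b2: "\<exists>c\<in>C. (\<forall>i\<in>Z. c i = c0 i) \<and> restrict m (X \<union> Y3) = h (restrict c Y)"
    if m: "m \<in> V" for m
  proof -
    obtain c where mP: "m \<in> PiE ({1..n} - B) (\<lambda>_. A)" and mX: "restrict m X = M" and c: "c \<in> C"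
      and e: "restrict (Phi \<phi> n B m c) Y = t" using m Vchar by blast
    have mM: "m i = M i" if "i \<in> X" for i using fun_cong[OF mX, of i] that by simp
    have eY: "Phi \<phi> n B m c i = t i" if "i \<in> Y" for i using fun_cong[OF e, of i] that by simp
    have "\<forall>i\<in>Z. c i = c0 i"
    proof
      fix i assume iZ: "i \<in> Z"
      then have iY: "i \<in> Y" and iBX: "i \<in> B \<union> X" by (auto simp: Z_def)
      have iE: "i \<in> {1..n}" using YE[OF iY] .
      show "c i = c0 i"
      proof (cases "i \<in> B")
        case True then show ?thesis using eY[OF iY] tY[OF iY iBX] iE by (simp add: PhiA)
      next
        case False
        then have iX: "i \<in> X" using iBX by simp
        have "\<phi> (c i) (M i) = \<phi> (c0 i) (M i)"
          using eY[OF iY] tY[OF iY iBX] iE False mM[OF iX] by (simp add: PhiA)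
        then show ?thesis using inj1 MA[OF iX] cA[OF c iE] cA[OF c0 iE] by blast
      qed
    qed
    moreover have "restrict m (X \<union> Y3) = h (restrict c Y)"
    proof
      fix i show "restrict m (X \<union> Y3) i = h (restrict c Y) i"
      proof (cases "i \<in> X")
        case True then show ?thesis using mM by (simp add: h_def)
      next
        case False
        show ?thesis
        proof (cases "i \<in> Y3")
          case True
          then have iY: "i \<in> Y" and iE: "i \<in> {1..n}" and iB: "i \<notin> B" using YE by (auto simp: Y3_def)
          have "m i \<in> A" using mP iE iB by (simp add: PiE_iff)
          moreover have "t i = \<phi> (c i) (m i)" using eY[OF iY] iE iB by (simp add: PhiA)
          ultimately have "inv_into A (\<phi> (c i)) (t i) = m i" using psi2 cA[OF c iE] by simp
          then show ?thesis using True False iY by (simp add: h_def)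
        qed (use False in \<open>simp add: h_def\<close>)
      qed
    qed
    ultimately show ?thesis using c by blast
  qed
  have injh: "inj_on h F"
  proof (rule inj_onI)
    fix y y' assume y: "y \<in> F" and y': "y' \<in> F" and e: "h y = h y'"
    obtain c where c: "c \<in> C" "y = restrict c Y" using y by (auto simp: F_def proj_def)
    obtain c' where c': "c' \<in> C" "y' = restrict c' Y" using y' by (auto simp: F_def proj_def)
    have yZ: "restrict y Z = restrict c0 Z" "restrict y' Z = restrict c0 Z" using y y' by (auto simp: F_def)
    show "y = y'"
    proof
      fix i show "y i = y' i"
      proof (cases "i \<in> Y")
        case False then show ?thesis using c c' by simp
      next
        case iY: True
        have iE: "i \<in> {1..n}" using YE[OF iY] .
        show ?thesis
        proof (cases "i \<in> Z")
          case True then show ?thesis using fun_cong[OF yZ(1), of i] fun_cong[OF yZ(2), of i] by simp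
        next
          case False
          then have i3: "i \<in> Y3" "i \<notin> X" using iY by (auto simp: Z_def Y3_def)
          define \<mu> where "\<mu> = inv_into A (\<phi> (y i)) (t i)"
          have "\<mu> = inv_into A (\<phi> (y' i)) (t i)" using fun_cong[OF e, of i] i3 by (simp add: h_def \<mu>_def)
          have yA: "y i \<in> A" "y' i \<in> A" using cA[OF c(1) iE] cA[OF c'(1) iE] c c' iY by auto
          have "\<mu> \<in> A" using psiA yA tA[OF iY] by (simp add: \<mu>_def)
          moreover have "\<phi> (y i) \<mu> = t i" using psi1 yA tA[OF iY] by (simp add: \<mu>_def)
          moreover have "\<phi> (y' i) \<mu> = t i" using psi1 yA tA[OF iY] \<open>\<mu> = inv_into A (\<phi> (y' i)) (t i)\<close> by simp
          ultimately show ?thesis using inj1 yA by metis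
        qed
      qed
    qed
  qed
  have hF: "h ` F = S"
  proof (intro equalityI subsetI)
    fix s assume "s \<in> h ` F"
    then obtain y where y: "y \<in> F" "s = h y" by blast
    obtain c where c: "c \<in> C" "y = restrict c Y" using y by (auto simp: F_def proj_def)
    have "restrict (restrict c Y) Z = restrict c0 Z" using y c by (simp add: F_def)
    then have "\<forall>i\<in>Z. c i = c0 i" using ZY by (auto simp: fun_eq_iff restrict_def split: if_splits)
    then obtain m where mm: "m \<in> V" "restrict m (X \<union> Y3) = h (restrict c Y)" using b1 c(1) by blast
    have "s = restrict m (X \<union> Y3)" using mm y c by simp
    then show "s \<in> S" using mm(1) unfolding S_def by blast
  next
    fix s assume "s \<in> S"
    then obtain m where m: "m \<in> V" "s = restrict m (X \<union> Y3)" by (auto simp: S_def)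
    obtain c where c: "c \<in> C" "\<forall>i\<in>Z. c i = c0 i" "restrict m (X \<union> Y3) = h (restrict c Y)" using b2[OF m(1)] by blast
    have "restrict c Y \<in> F"
    proof -
      have "restrict (restrict c Y) Z = restrict c0 Z" using c(2) ZY by (auto simp: fun_eq_iff restrict_def)
      then show ?thesis using c(1) by (auto simp: F_def proj_def)
    qed
    then show "s \<in> h ` F" using m c by auto
  qed
  have cardS: "card S = q ^ (rY - rZ)" using card_image[OF injh] hF cardF by simp

  have SP: "S \<subseteq> PiE (X \<union> Y3) (\<lambda>_. A)"
  proof
    fix s assume "s \<in> S"
    then obtain m where m: "m \<in> V" "s = restrict m (X \<union> Y3)" by (auto simp: S_def)
    have "m \<in> PiE ({1..n} - B) (\<lambda>_. A)" using m(1) Vchar by blast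
    then show "s \<in> PiE (X \<union> Y3) (\<lambda>_. A)" using m(2) X3(2) by (auto simp: PiE_iff)
  qed
  have Veq: "V = {m \<in> PiE ({1..n} - B) (\<lambda>_. A). restrict m (X \<union> Y3) \<in> S}"
  proof (intro equalityI subsetI)
    fix m assume "m \<in> V"
    then show "m \<in> {m \<in> PiE ({1..n} - B) (\<lambda>_. A). restrict m (X \<union> Y3) \<in> S}"
      using Vchar by (auto simp: S_def)
  next
    fix m assume "m \<in> {m \<in> PiE ({1..n} - B) (\<lambda>_. A). restrict m (X \<union> Y3) \<in> S}"
    then have mP: "m \<in> PiE ({1..n} - B) (\<lambda>_. A)" and "restrict m (X \<union> Y3) \<in> S" by auto
    then obtain m' where m': "m' \<in> V" "restrict m (X \<union> Y3) = restrict m' (X \<union> Y3)" by (auto simp: S_def)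
    have mm: "m i = m' i" if "i \<in> X \<union> Y3" for i using fun_cong[OF m'(2), of i] that by simp
    obtain c where m'X: "restrict m' X = M" and c: "c \<in> C"
      and e: "restrict (Phi \<phi> n B m' c) Y = t" using m'(1) Vchar by blast
    have "restrict m X = M"
    proof
      fix i show "restrict m X i = M i" using fun_cong[OF m'X, of i] mm[of i] by (cases "i \<in> X") auto
    qed
    moreover have "restrict (Phi \<phi> n B m c) Y = t"
    proof
      fix i show "restrict (Phi \<phi> n B m c) Y i = t i"
      proof (cases "i \<in> Y \<and> i \<notin> B")
        case True
        then have "i \<in> X \<union> Y3" by (auto simp: Y3_def)
        then show ?thesis using fun_cong[OF e, of i] mm[of i] True YE[of i] by (simp add: PhiA)
      next
        case False
        then show ?thesis using fun_cong[OF e, of i] Bn by (auto simp: PhiA)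
      qed
    qed
    ultimately show "m \<in> V" using mP c Vchar by blast
  qed
  have cardV: "card V = card S * q ^ card (({1..n} - B) - (X \<union> Y3))"
    unfolding Veq q_def by (rule card_restrict_sel[OF _ X3(2) SP]) simp

  have "S \<subseteq> {s \<in> PiE (X \<union> Y3) (\<lambda>_. A). restrict s X \<in> {M}}"
  proof
    fix s assume s: "s \<in> S"
    then obtain m where m: "m \<in> V" "s = restrict m (X \<union> Y3)" by (auto simp: S_def)
    have "restrict m X = M" using m(1) Vchar by blast
    have XX: "(X \<union> Y3) \<inter> X = X" by blast
    have "restrict s X = restrict m X" using m(2) XX by simp
    then have "restrict s X = M" using \<open>restrict m X = M\<close> by simp
    then show "s \<in> {s \<in> PiE (X \<union> Y3) (\<lambda>_. A). restrict s X \<in> {M}}" using s SP by auto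
  qed
  moreover have finP: "finite (PiE (X \<union> Y3) (\<lambda>_. A))"
    using finite_subset[OF X3(2)] assms(1) by (simp add: finite_PiE)
  ultimately have "card S \<le> card {s \<in> PiE (X \<union> Y3) (\<lambda>_. A). restrict s X \<in> {M}}"
    by (intro card_mono) (rule finite_subset[OF _ finP], blast)
  also have "\<dots> = card {M} * card A ^ card ((X \<union> Y3) - X)"
  proof (rule card_restrict_sel)
    show "finite (X \<union> Y3)" using finite_subset[OF X3(2)] by simp
    show "X \<subseteq> X \<union> Y3" by (rule Un_upper1)
    show "{M} \<subseteq> PiE X (\<lambda>_. A)" using assms(7) by simp
  qed
  also have "(X \<union> Y3) - X = Y3" using X3(1) by blast
  finally have "card S \<le> card A ^ card Y3" by simp
  then have "q ^ (rY - rZ) \<le> q ^ card Y3" using cardS by (simp add: q_def)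
  moreover have "1 < q" using assms(2) by (simp add: q_def)
  ultimately have e3: "rY - rZ \<le> card Y3" by (rule power_le_imp_le_exp[rotated])

  define D where "D = Dcode A \<phi> n B C X M"
  define T where "T = (\<lambda>z. restrict (\<lambda>i. if i \<in> B then z i else \<phi> (z i) (M i)) Z)"
  have Dmem: "d \<in> D \<longleftrightarrow> (\<exists>m\<in>PiE ({1..n} - B) (\<lambda>_. A). restrict m X = M \<and> (\<exists>c\<in>C. d = Phi \<phi> n B m c))" for d
    unfolding D_def Dcode_def Cm_def by blast
  have projD: "proj D Y = {y \<in> PiE Y (\<lambda>_. A). restrict y Z \<in> T ` proj C Z}"
  proof (intro equalityI subsetI)
    fix y assume "y \<in> proj D Y"
    then obtain d where d: "d \<in> D" "y = restrict d Y" by (auto simp: proj_def)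
    then obtain m c where m: "m \<in> PiE ({1..n} - B) (\<lambda>_. A)" "restrict m X = M" and c: "c \<in> C"
      and dd: "d = Phi \<phi> n B m c" using Dmem by blast
    have mA: "m i \<in> A" if "i \<in> {1..n} - B" for i using m(1) that by (rule PiE_mem)
    have mM: "m i = M i" if "i \<in> X" for i using fun_cong[OF m(2), of i] that by simp
    have "\<forall>i\<in>Y. d i \<in> A"
    proof
      fix i assume iY: "i \<in> Y"
      have iE: "i \<in> {1..n}" using YE[OF iY] .
      show "d i \<in> A"
        using cA[OF c iE] mA[of i] iE phA by (cases "i \<in> B") (simp_all add: dd PhiA)
    qed
    then have "y \<in> PiE Y (\<lambda>_. A)" using d(2) by (simp add: restrict_PiE_iff)
    moreover have "restrict y Z = T (restrict c Z)"
    proof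
      fix i show "restrict y Z i = T (restrict c Z) i"
      proof (cases "i \<in> Z")
        case True
        then have iY: "i \<in> Y" and iBX: "i \<in> B \<union> X" by (auto simp: Z_def)
        have iE: "i \<in> {1..n}" using YE[OF iY] .
        show ?thesis
        proof (cases "i \<in> B")
          case True then show ?thesis using \<open>i \<in> Z\<close> iY iE by (simp add: T_def d(2) dd PhiA)
        next
          case False
          then have "i \<in> X" using iBX by simp
          then show ?thesis using \<open>i \<in> Z\<close> iY iE False mM by (simp add: T_def d(2) dd PhiA)
        qed
      qed (simp add: T_def)
    qed
    moreover have "restrict c Z \<in> proj C Z" using c by (auto simp: proj_def)
    ultimately show "y \<in> {y \<in> PiE Y (\<lambda>_. A). restrict y Z \<in> T ` proj C Z}" by blast
  next
    fix y assume "y \<in> {y \<in> PiE Y (\<lambda>_. A). restrict y Z \<in> T ` proj C Z}"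
    then have yP: "y \<in> PiE Y (\<lambda>_. A)" and "restrict y Z \<in> T ` proj C Z" by auto
    then obtain c where c: "c \<in> C" and yT: "restrict y Z = T (restrict c Z)" by (auto simp: proj_def)
    have yA: "y i \<in> A" if "i \<in> Y" for i using yP that by (rule PiE_mem)
    have yout: "y i = undefined" if "i \<notin> Y" for i using yP that by (rule PiE_arb)
    define m where "m = restrict (\<lambda>i. if i \<in> X then M i else if i \<in> Y then inv_into A (\<phi> (c i)) (y i) else a0) ({1..n} - B)"
    have "m \<in> PiE ({1..n} - B) (\<lambda>_. A)"
      unfolding m_def restrict_PiE_iff
    proof
      fix i assume i: "i \<in> {1..n} - B"
      show "(if i \<in> X then M i else if i \<in> Y then inv_into A (\<phi> (c i)) (y i) else a0) \<in> A"
        using MA[of i] psiA[OF cA[OF c] yA, of i] a0 i by auto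
    qed
    moreover have "restrict m X = M"
    proof
      fix i show "restrict m X i = M i"
        using XE[of i] Mx[of i] by (cases "i \<in> X") (simp_all add: m_def)
    qed
    ultimately have dD: "Phi \<phi> n B m c \<in> D" using Dmem c by blast
    have "restrict (Phi \<phi> n B m c) Y = y"
    proof
      fix i show "restrict (Phi \<phi> n B m c) Y i = y i"
      proof (cases "i \<in> Y")
        case False then show ?thesis using yout by simp
      next
        case iY: True
        have iE: "i \<in> {1..n}" using YE[OF iY] .
        have yZ: "y i = T (restrict c Z) i" if "i \<in> Z" using fun_cong[OF yT, of i] that by simp
        show ?thesis
        proof (cases "i \<in> B")
          case True
          then have "i \<in> Z" using iY by (simp add: Z_def)
          then show ?thesis using yZ True iY iE by (simp add: T_def PhiA)
        next
          case nB: False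
          show ?thesis
          proof (cases "i \<in> X")
            case True
            then have "i \<in> Z" using iY by (simp add: Z_def)
            then show ?thesis using yZ True nB iY iE by (simp add: T_def PhiA m_def)
          next
            case False
            have "\<phi> (c i) (inv_into A (\<phi> (c i)) (y i)) = y i" using psi1 cA[OF c iE] yA[OF iY] by simp
            then show ?thesis using False nB iY iE by (simp add: PhiA m_def)
          qed
        qed
      qed
    qed
    then show "y \<in> proj D Y" using dD unfolding proj_def by blast
  qed
  have injT: "inj_on T (proj C Z)"
  proof (rule inj_onI)
    fix z z' assume z: "z \<in> proj C Z" and z': "z' \<in> proj C Z" and e: "T z = T z'"
    have zP: "z \<in> PiE Z (\<lambda>_. A)" "z' \<in> PiE Z (\<lambda>_. A)" using proj_mem[OF z Zn] proj_mem[OF z' Zn] by auto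
    show "z = z'"
    proof
      fix i show "z i = z' i"
      proof (cases "i \<in> Z")
        case False then show ?thesis using zP PiE_arb by metis
      next
        case True
        have eq: "(if i \<in> B then z i else \<phi> (z i) (M i)) = (if i \<in> B then z' i else \<phi> (z' i) (M i))"
          using fun_cong[OF e, of i] True by (simp add: T_def)
        show ?thesis
        proof (cases "i \<in> B")
          case True then show ?thesis using eq by simp
        next
          case False
          then have iX: "i \<in> X" using \<open>i \<in> Z\<close> by (simp add: Z_def)
          have "z i \<in> A" "z' i \<in> A" using zP \<open>i \<in> Z\<close> PiE_mem by metis+
          then show ?thesis using eq False inj1[OF MA[OF iX]] by simp
        qed
      qed
    qed
  qed
  have "card (proj D Y) = card (T ` proj C Z) * card A ^ card (Y - Z)"
    unfolding projD
  proof (rule card_restrict_sel)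
    show "finite Y" using finite_subset[OF assms(9)] by simp
    show "Z \<subseteq> Y" by (rule ZY)
    show "T ` proj C Z \<subseteq> PiE Z (\<lambda>_. A)"
    proof
      fix u assume "u \<in> T ` proj C Z"
      then obtain z where z: "z \<in> proj C Z" "u = T z" by blast
      have zP: "z \<in> PiE Z (\<lambda>_. A)" using proj_mem[OF z(1) Zn] .
      have "\<forall>i\<in>Z. (if i \<in> B then z i else \<phi> (z i) (M i)) \<in> A"
      proof
        fix i assume iZ: "i \<in> Z"
        have "z i \<in> A" using zP iZ by (rule PiE_mem)
        moreover have "M i \<in> A" if "i \<notin> B" using MA iZ that by (auto simp: Z_def)
        ultimately show "(if i \<in> B then z i else \<phi> (z i) (M i)) \<in> A" using phA by simp
      qed
      then show "u \<in> PiE Z (\<lambda>_. A)" using z(2) by (simp add: T_def restrict_PiE_iff)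
    qed
  qed
  also have "card (T ` proj C Z) = card A ^ rZ" using card_image[OF injT] proj_pow[OF Zn] by (simp add: rZ_def)
  also have "Y - Z = Y3" by (auto simp: Z_def Y3_def)
  finally have "card (proj D Y) = card A ^ (card Y3 + rZ)" by (simp add: power_add)
  then have rD: "aa_rank A D Y = card Y3 + rZ" by (rule rank_eq)

  have rho_eq: "rho A \<phi> n B C X M Y = card Y3 + rZ - rY"
    using rD by (simp add: rho_def D_def rY_def)
  have cE: "card ({1..n} - B) = n - card B"
    using Bn finite_subset[OF Bn] card_Diff_subset[of B "{1..n}"] by simp
  have cW: "card (({1..n} - B) - (X \<union> Y3)) = n - card B - card X - card Y3"
  proof -
    have "card (({1..n} - B) - (X \<union> Y3)) = card ({1..n} - B) - card (X \<union> Y3)"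
      using X3(2) finite_subset[OF X3(2)] by (simp add: card_Diff_subset)
    moreover have "card (X \<union> Y3) = card X + card Y3"
      using X3 finite_subset[OF X3(2)] by (simp add: card_Un_disjoint)
    ultimately show ?thesis using cE by simp
  qed
  have le: "card X + card Y3 \<le> n - card B"
  proof -
    have "card (X \<union> Y3) \<le> card ({1..n} - B)" using X3(2) by (simp add: card_mono)
    then show ?thesis using cE X3 finite_subset[OF X3(2)] by (simp add: card_Un_disjoint)
  qed
  have "card V = q ^ (rY - rZ) * q ^ (n - card B - card X - card Y3)"
    using cardV cardS cW by simp
  also have "\<dots> = q ^ (n - k - card X - rho A \<phi> n B C X M Y)"
  proof -
    have "n - k - card X - rho A \<phi> n B C X M Y = (rY - rZ) + (n - card B - card X - card Y3)"
      using rho_eq kB le rZY e3 by linarith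
    then show ?thesis by (simp add: power_add)
  qed
  finally show ?thesis by (simp add: V_def q_def)
qed


end
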